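(* Assume $0<\underline{d}_w<\overline{d}_w\le L\cos(\underline{\theta}_w)<L/\cos(\underline{\theta}_w)$, where $\underline{\theta}_w\in(0,\pi/2)$. Consider the optimization problem $$\max_{P,d_w,\theta_w}\ \gamma_b(P,d_w,\theta_w)\quad\text{s.t.}\quad \mathcal{D}_{01}(P,d_w,\theta_w)\le2\epsilon^2,\ \ 0<P\le P_m,\ \ \underline{d}_w\le d_w\le\overline{d}_w,\ \ \underline{\theta}_w\le\theta_w\le\frac{\pi}{2}.$$ Then any optimal solution $(P^\ast,d_w^\ast,\theta_w^\ast)$ satisfies $d_w^\ast=\overline{d}_w$ and $\underline{\theta}_w\le\theta_w^\ast\le\arccos(\overline{d}_w/L)$. This conclusion holds regardless of the maximum transmit power constraint $P\le P_m$ (i.e., also when this constraint is removed).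
   Context: Setting: Willie and Bob are ground points at distance $L>0$; a UAV (transmitter) lies in the vertical plane through them, on Bob's side, at distance $d_w>0$ from Willie and at elevation angle $\theta_w\in[0,\pi/2]$ (radians) seen from Willie, and transmits with power $P$. Constants: path-loss exponents $\xi_{\mathrm{L}}<0$, $\xi_{\mathrm{N}}<0$; $a,b>0$; noise variances $\sigma_b^2,\sigma_w^2>0$; blocklength $n\in\mathbb{N}$; covertness parameter $\epsilon>0$; maximum power $P_m>0$. Define $d_b=\sqrt{L^2+d_w^2-2d_wL\cos(\theta_w)}$, $$p_b=\frac{1}{1+a\exp\!\left(-b\left[\frac{180}{\pi}\arcsin\!\left(\frac{d_w\sin\theta_w}{d_b}\right)-a\right]\right)},\qquad p_w=\frac{1}{1+a\exp\!\left(-b\left[\frac{180}{\pi}\theta_w-a\right]\right)},$$ $f(d_w,\theta_w)=d_b^{\xi_{\mathrm{L}}}p_b$, and the SNR at Bob $\gamma_b(P,d_w,\theta_w)=Pf(d_w,\theta_w)/\sigma_b^2$. With $\bar P=P d_w^{\xi_{\mathrm{L}}}p_w+P d_w^{\xi_{\mathrm{N}}}$, define the KL divergence $$\mathcal{D}_{01}(P,d_w,\theta_w)=\frac{n}{2}\left[\ln\!\left(\frac{\bar P+\sigma_w^2}{\sigma_w^2}\right)-\frac{\bar P}{\bar P+\sigma_w^2}\right].$$ *)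

theory Defs
  imports Complex_Main
begin

text \<open>Parameters: L (Willie--Bob distance), a, b (LoS probability constants),
  xiL, xiN (path-loss exponents), sb2, sw2 (noise variances), n (blocklength).\<close>

definition d_b :: "real \<Rightarrow> real \<Rightarrow> real \<Rightarrow> real" where
  "d_b L dw th = sqrt (L\<^sup>2 + dw\<^sup>2 - 2 * dw * L * cos th)"

definition p_b :: "real \<Rightarrow> real \<Rightarrow> real \<Rightarrow> real \<Rightarrow> real \<Rightarrow> real" where
  "p_b a b L dw th =
     1 / (1 + a * exp (- b * ((180 / pi) * arcsin (dw * sin th / d_b L dw th) - a)))"

definition p_w :: "real \<Rightarrow> real \<Rightarrow> real \<Rightarrow> real" where
  "p_w a b th = 1 / (1 + a * exp (- b * ((180 / pi) * th - a)))"

definition f_ch :: "real \<Rightarrow> real \<Rightarrow> real \<Rightarrow> real \<Rightarrow> real \<Rightarrow> real \<Rightarrow> real" where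
  "f_ch a b xiL L dw th = (d_b L dw th) powr xiL * p_b a b L dw th"

definition gamma_b :: "real \<Rightarrow> real \<Rightarrow> real \<Rightarrow> real \<Rightarrow> real \<Rightarrow> real \<Rightarrow> real \<Rightarrow> real \<Rightarrow> real" where
  "gamma_b a b xiL L sb2 P dw th = P * f_ch a b xiL L dw th / sb2"

definition Pbar :: "real \<Rightarrow> real \<Rightarrow> real \<Rightarrow> real \<Rightarrow> real \<Rightarrow> real \<Rightarrow> real \<Rightarrow> real" where
  "Pbar a b xiL xiN P dw th = P * dw powr xiL * p_w a b th + P * dw powr xiN"

definition D01 :: "nat \<Rightarrow> real \<Rightarrow> real \<Rightarrow> real \<Rightarrow> real \<Rightarrow> real \<Rightarrow> real \<Rightarrow> real \<Rightarrow> real \<Rightarrow> real" where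
  "D01 n a b xiL xiN sw2 P dw th =
     (let Q = Pbar a b xiL xiN P dw th in
      real n / 2 * (ln ((Q + sw2) / sw2) - Q / (Q + sw2)))"

text \<open>Feasible set of the optimisation problem; the argument \<open>Pmax\<close> is
  \<open>Some Pm\<close> when the power constraint \<open>P \<le> Pm\<close> is imposed and \<open>None\<close>
  when it is removed.\<close>

definition feasible :: "nat \<Rightarrow> real \<Rightarrow> real \<Rightarrow> real \<Rightarrow> real \<Rightarrow> real \<Rightarrow> real \<Rightarrow> real option \<Rightarrow> real \<Rightarrow> real \<Rightarrow> real \<Rightarrow> real \<Rightarrow> real \<Rightarrow> real \<Rightarrow> bool" where
  "feasible n a b xiL xiN sw2 eps Pmax dlo dhi thlo P dw th \<longleftrightarrow>
     D01 n a b xiL xiN sw2 P dw th \<le> 2 * eps\<^sup>2 \<and>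
     0 < P \<and> (case Pmax of None \<Rightarrow> True | Some Pm \<Rightarrow> P \<le> Pm) \<and>
     dlo \<le> dw \<and> dw \<le> dhi \<and> thlo \<le> th \<and> th \<le> pi / 2"

definition optimal :: "nat \<Rightarrow> real \<Rightarrow> real \<Rightarrow> real \<Rightarrow> real \<Rightarrow> real \<Rightarrow> real \<Rightarrow> real \<Rightarrow> real \<Rightarrow> real option \<Rightarrow> real \<Rightarrow> real \<Rightarrow> real \<Rightarrow> real \<Rightarrow> real \<Rightarrow> real \<Rightarrow> bool" where
  "optimal n a b xiL xiN L sb2 sw2 eps Pmax dlo dhi thlo P dw th \<longleftrightarrow>
     feasible n a b xiL xiN sw2 eps Pmax dlo dhi thlo P dw th \<and>
     (\<forall>P' dw' th'. feasible n a b xiL xiN sw2 eps Pmax dlo dhi thlo P' dw' th' \<longrightarrow>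
        gamma_b a b xiL L sb2 P' dw' th' \<le> gamma_b a b xiL L sb2 P dw th)"

end

theory Submission
  imports Defs
begin

lemma sig_mono:
  fixes a b t1 t2 :: real
  assumes "a > 0" "b > 0" "t1 \<le> t2"
  shows "1 / (1 + a * exp (- b * (t1 - a))) \<le> 1 / (1 + a * exp (- b * (t2 - a)))"
proof -
  have "exp (- b * (t2 - a)) \<le> exp (- b * (t1 - a))"
    using assms by (simp add: mult_left_mono)
  hence "a * exp (- b * (t2 - a)) \<le> a * exp (- b * (t1 - a))"
    using assms by (simp add: mult_left_mono)
  moreover have "0 < 1 + a * exp (- b * (t2 - a))" using assms by (simp add: add_pos_pos)
  ultimately show ?thesis by (simp add: frac_le)
qed

lemma sig_pos:
  fixes a b t :: real
  assumes "a > 0"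
  shows "0 < 1 / (1 + a * exp (- b * (t - a)))"
  using assms by (simp add: add_pos_pos)

lemma h_mono:
  fixes s q1 q2 :: real
  assumes "s > 0" "0 \<le> q1" "q1 \<le> q2"
  shows "ln ((q1 + s) / s) - q1 / (q1 + s) \<le> ln ((q2 + s) / s) - q2 / (q2 + s)"
proof -
  define u where "u = (q1 + s) / (q2 + s)"
  have u0: "0 < u" using assms by (simp add: u_def)
  have lnu: "ln u \<le> u - 1" using ln_le_minus_one[OF u0] .
  have e1: "ln ((q2 + s) / s) - ln ((q1 + s) / s) = - ln u"
    using assms by (simp add: u_def ln_div)
  have e2: "q2 / (q2 + s) - q1 / (q1 + s) = s * (q2 - q1) / ((q1 + s) * (q2 + s))"
    using assms by (simp add: field_simps)
  have e3: "1 - u = (q2 - q1) / (q2 + s)" using assms by (simp add: u_def field_simps)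
  have "s * (q2 - q1) / ((q1 + s) * (q2 + s)) = (s / (q1 + s)) * ((q2 - q1) / (q2 + s))"
    by simp
  also have "\<dots> \<le> 1 * ((q2 - q1) / (q2 + s))"
    using assms by (intro mult_right_mono) auto
  finally have "q2 / (q2 + s) - q1 / (q1 + s) \<le> 1 - u" using e2 e3 by simp
  thus ?thesis using e1 lnu by linarith
qed

lemma db_alt:
  "d_b L dw th = sqrt ((L - dw * cos th)\<^sup>2 + (dw * sin th)\<^sup>2)"
proof -
  have e: "(L - dw * cos th)\<^sup>2 + (dw * sin th)\<^sup>2 - (L\<^sup>2 + dw\<^sup>2 - 2 * dw * L * cos th) = dw\<^sup>2 * ((sin th)\<^sup>2 + (cos th)\<^sup>2 - 1)"
    by algebra
  have "(sin th)\<^sup>2 + (cos th)\<^sup>2 - 1 = 0" by simp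
  with e have "(L - dw * cos th)\<^sup>2 + (dw * sin th)\<^sup>2 = L\<^sup>2 + dw\<^sup>2 - 2 * dw * L * cos th" by simp
  thus ?thesis by (simp add: d_b_def)
qed

lemma ratio_bounds:
  fixes L dw th :: real
  assumes "0 < d_b L dw th" "0 \<le> dw" "0 \<le> sin th"
  shows "0 \<le> dw * sin th / d_b L dw th \<and> dw * sin th / d_b L dw th \<le> 1"
proof -
  have "dw * sin th = sqrt ((dw * sin th)\<^sup>2)" using assms by simp
  also have "\<dots> \<le> d_b L dw th" unfolding db_alt by (rule real_sqrt_le_mono) simp
  finally show ?thesis using assms by simp
qed

lemma f_better:
  fixes a b xiL L dw th dw' th' :: real
  assumes "a > 0" "b > 0" "xiL < 0" "0 < d_b L dw' th'" "d_b L dw' th' < d_b L dw th"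
    "0 \<le> dw * sin th / d_b L dw th"
    "dw * sin th / d_b L dw th \<le> dw' * sin th' / d_b L dw' th'"
    "dw' * sin th' / d_b L dw' th' \<le> 1"
  shows "f_ch a b xiL L dw th < f_ch a b xiL L dw' th'"
proof -
  have "arcsin (dw * sin th / d_b L dw th) \<le> arcsin (dw' * sin th' / d_b L dw' th')"
    using assms by (intro arcsin_le_arcsin) auto
  hence "180 / pi * arcsin (dw * sin th / d_b L dw th) \<le> 180 / pi * arcsin (dw' * sin th' / d_b L dw' th')"
    by (intro mult_left_mono) auto
  hence pb: "p_b a b L dw th \<le> p_b a b L dw' th'"
    unfolding p_b_def using assms by (intro sig_mono) auto
  have pb0: "0 < p_b a b L dw th" unfolding p_b_def using assms by (intro sig_pos)
  have pw: "d_b L dw th powr xiL < d_b L dw' th' powr xiL"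
    using assms by (intro powr_less_mono2_neg) auto
  have "d_b L dw th powr xiL * p_b a b L dw th < d_b L dw' th' powr xiL * p_b a b L dw th"
    using pw pb0 by simp
  also have "\<dots> \<le> d_b L dw' th' powr xiL * p_b a b L dw' th'"
    using pb by (intro mult_left_mono) auto
  finally show ?thesis by (simp add: f_ch_def)
qed

lemma Pbar_mono:
  fixes a b xiL xiN P dw th dw' th' :: real
  assumes "a > 0" "b > 0" "xiL < 0" "xiN < 0" "P > 0" "0 < dw" "dw \<le> dw'" "th' \<le> th"
  shows "Pbar a b xiL xiN P dw' th' \<le> Pbar a b xiL xiN P dw th"
    and "0 \<le> Pbar a b xiL xiN P dw' th'"
proof -
  have "180 / pi * th' \<le> 180 / pi * th" using assms by (intro mult_left_mono) auto
  hence p1: "p_w a b th' \<le> p_w a b th" unfolding p_w_def using assms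
    by (intro sig_mono) auto
  have p0: "0 < p_w a b th'" unfolding p_w_def using assms by (intro sig_pos)
  have w1: "dw' powr xiL \<le> dw powr xiL" using assms by (intro powr_mono2') auto
  have w2: "dw' powr xiN \<le> dw powr xiN" using assms by (intro powr_mono2') auto
  have "dw' powr xiL * p_w a b th' \<le> dw powr xiL * p_w a b th"
    using p1 p0 w1 by (intro mult_mono) auto
  hence "P * (dw' powr xiL * p_w a b th') \<le> P * (dw powr xiL * p_w a b th)"
    using assms by (intro mult_left_mono) auto
  moreover have "P * dw' powr xiN \<le> P * dw powr xiN" using w2 assms by (intro mult_left_mono) auto
  ultimately show "Pbar a b xiL xiN P dw' th' \<le> Pbar a b xiL xiN P dw th"
    unfolding Pbar_def by (metis add_mono mult.assoc)
  show "0 \<le> Pbar a b xiL xiN P dw' th'" unfolding Pbar_def using assms p0 by simp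
qed


lemma caseA:
  fixes L dw dhi th :: real
  assumes "L > 0" "0 < dw" "dw < dhi" "dhi < L" "dhi \<le> L * cos th" "0 \<le> sin th"
  shows "0 < d_b L dhi th" "d_b L dhi th < d_b L dw th"
    "dw * sin th / d_b L dw th \<le> dhi * sin th / d_b L dhi th"
proof -
  have c1: "cos th \<le> 1" by simp
  have "dhi * cos th \<le> dhi" using c1 assms mult_left_mono[of "cos th" 1 dhi] by simp
  hence A2: "0 < L - dhi * cos th" using assms by linarith
  have "dw * cos th \<le> dw" using c1 assms mult_left_mono[of "cos th" 1 dw] by simp
  hence A1: "0 < L - dw * cos th" using assms by linarith
  show p2: "0 < d_b L dhi th" unfolding db_alt using A2
    by (intro real_sqrt_gt_zero add_pos_nonneg) auto
  have p1: "0 < d_b L dw th" unfolding db_alt using A1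
    by (intro real_sqrt_gt_zero add_pos_nonneg) auto
  have "(dhi - dw) * (dhi + dw - 2 * L * cos th) < 0"
    using assms by (intro mult_pos_neg) auto
  moreover have "(L\<^sup>2 + dhi\<^sup>2 - 2 * dhi * L * cos th) - (L\<^sup>2 + dw\<^sup>2 - 2 * dw * L * cos th)
      = (dhi - dw) * (dhi + dw - 2 * L * cos th)"
    by (simp add: algebra_simps power2_eq_square)
  ultimately show "d_b L dhi th < d_b L dw th" unfolding d_b_def
    by (intro real_sqrt_less_mono) linarith
  have m: "dw * (L - dhi * cos th) \<le> dhi * (L - dw * cos th)"
    using assms by (simp add: algebra_simps mult_right_mono)
  have "(dw * (L - dhi * cos th))\<^sup>2 \<le> (dhi * (L - dw * cos th))\<^sup>2"
    using m A2 assms by (intro power_mono) auto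
  moreover have "dw\<^sup>2 * ((L - dhi * cos th)\<^sup>2 + (dhi * sin th)\<^sup>2) = (dw * (L - dhi * cos th))\<^sup>2 + (dw * dhi * sin th)\<^sup>2"
    by algebra
  moreover have "dhi\<^sup>2 * ((L - dw * cos th)\<^sup>2 + (dw * sin th)\<^sup>2) = (dhi * (L - dw * cos th))\<^sup>2 + (dw * dhi * sin th)\<^sup>2"
    by algebra
  ultimately have "dw\<^sup>2 * ((L - dhi * cos th)\<^sup>2 + (dhi * sin th)\<^sup>2) \<le> dhi\<^sup>2 * ((L - dw * cos th)\<^sup>2 + (dw * sin th)\<^sup>2)"
    by linarith
  hence "sqrt (dw\<^sup>2 * ((L - dhi * cos th)\<^sup>2 + (dhi * sin th)\<^sup>2)) \<le> sqrt (dhi\<^sup>2 * ((L - dw * cos th)\<^sup>2 + (dw * sin th)\<^sup>2))"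
    by (rule real_sqrt_le_mono)
  hence "dw * d_b L dhi th \<le> dhi * d_b L dw th"
    unfolding db_alt using assms by (simp add: real_sqrt_mult)
  hence "dw * sin th * d_b L dhi th \<le> dhi * sin th * d_b L dw th"
    using assms mult_right_mono[of "dw * d_b L dhi th" "dhi * d_b L dw th" "sin th"]
    by (simp add: algebra_simps)
  thus "dw * sin th / d_b L dw th \<le> dhi * sin th / d_b L dhi th"
    using p1 p2 by (simp add: divide_simps)
qed

lemma caseB:
  fixes L dw dhi th :: real
  assumes "L > 0" "0 < dw" "dw \<le> dhi" "dhi < L" "L * cos th < dhi" "0 \<le> sin th"
  defines "th0 \<equiv> arccos (dhi / L)"
  shows "0 < d_b L dhi th0" "d_b L dhi th0 < d_b L dw th"
    "dw * sin th / d_b L dw th \<le> dhi * sin th0 / d_b L dhi th0"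
proof -
  have r: "0 < dhi / L" "dhi / L < 1" using assms by auto
  have c0: "cos th0 = dhi / L" unfolding th0_def using r by (intro cos_arccos) auto
  have s0: "sin th0 = sqrt (1 - (dhi / L)\<^sup>2)" unfolding th0_def using r by (intro sin_arccos) auto
  have E0: "L\<^sup>2 + dhi\<^sup>2 - 2 * dhi * L * cos th0 = L\<^sup>2 - dhi\<^sup>2"
    using c0 assms by (simp add: power2_eq_square field_simps)
  have Lp: "0 < L\<^sup>2 - dhi\<^sup>2" using assms by (simp add: power_strict_mono)
  show p2: "0 < d_b L dhi th0" unfolding d_b_def E0 using Lp by simp
  have "dw * (L * cos th) < dw * dhi" using assms by simp
  moreover have "0 \<le> (dw - dhi)\<^sup>2" by simp
  ultimately have "L\<^sup>2 - dhi\<^sup>2 < L\<^sup>2 + dw\<^sup>2 - 2 * dw * L * cos th"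
    by (simp add: power2_eq_square algebra_simps)
  thus q: "d_b L dhi th0 < d_b L dw th" unfolding d_b_def E0
    by (intro real_sqrt_less_mono)
  have p1: "0 < d_b L dw th" using p2 q by linarith
  have "sqrt (1 - (dhi / L)\<^sup>2) = sqrt ((L\<^sup>2 - dhi\<^sup>2) / L\<^sup>2)"
    using assms by (simp add: field_simps)
  also have "\<dots> = sqrt (L\<^sup>2 - dhi\<^sup>2) / L" using assms by (simp add: real_sqrt_divide)
  finally have "dhi * sin th0 / d_b L dhi th0 = dhi / L"
    unfolding s0 d_b_def E0 using Lp by simp
  moreover have "dw * sin th / d_b L dw th \<le> dhi / L"
  proof -
    have "0 \<le> (L * cos th - dw)\<^sup>2" by simp
    moreover have "L\<^sup>2 + dw\<^sup>2 - 2*dw*L*cos th - (L*sin th)\<^sup>2 = (L*cos th - dw)\<^sup>2 + L\<^sup>2*(1 - (sin th)\<^sup>2 - (cos th)\<^sup>2)"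
      by algebra
    moreover have "1 - (sin th)\<^sup>2 - (cos th)\<^sup>2 = 0" using sin_cos_squared_add[of th] by linarith
    hence "L\<^sup>2*(1 - (sin th)\<^sup>2 - (cos th)\<^sup>2) = 0" by simp
    ultimately have "(L * sin th)\<^sup>2 \<le> L\<^sup>2 + dw\<^sup>2 - 2 * dw * L * cos th"
      by linarith
    hence "sqrt ((L * sin th)\<^sup>2) \<le> d_b L dw th" unfolding d_b_def by (rule real_sqrt_le_mono)
    hence "L * sin th \<le> d_b L dw th" using assms by simp
    hence "dw * (L * sin th) \<le> dhi * d_b L dw th"
      using assms p1 by (intro mult_mono) auto
    thus ?thesis using p1 assms by (simp add: divide_simps algebra_simps)
  qed
  ultimately show "dw * sin th / d_b L dw th \<le> dhi * sin th0 / d_b L dhi th0" by simp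
qed


theorem theorem1:
  fixes L a b xiL xiN sb2 sw2 eps Pm dlo dhi thlo :: real and n :: nat
  assumes "L > 0" and "xiL < 0" and "xiN < 0" and "a > 0" and "b > 0"
    and "sb2 > 0" and "sw2 > 0" and "n > 0" and "eps > 0" and "Pm > 0"
    and "0 < thlo" and "thlo < pi / 2"
    and "0 < dlo" and "dlo < dhi" and "dhi \<le> L * cos thlo" and "L * cos thlo < L / cos thlo"
  shows "\<forall>Pmax \<in> {Some Pm, None}. \<forall>P dw th.
           optimal n a b xiL xiN L sb2 sw2 eps Pmax dlo dhi thlo P dw th \<longrightarrow>
           dw = dhi \<and> thlo \<le> th \<and> th \<le> arccos (dhi / L)"
proof (intro ballI allI impI)
  fix Pmax P dw th
  assume opt: "optimal n a b xiL xiN L sb2 sw2 eps Pmax dlo dhi thlo P dw th"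
  have feas: "feasible n a b xiL xiN sw2 eps Pmax dlo dhi thlo P dw th"
    and best: "\<And>P' dw' th'. feasible n a b xiL xiN sw2 eps Pmax dlo dhi thlo P' dw' th' \<Longrightarrow>
        gamma_b a b xiL L sb2 P' dw' th' \<le> gamma_b a b xiL L sb2 P dw th"
    using opt unfolding optimal_def by auto
  have D: "D01 n a b xiL xiN sw2 P dw th \<le> 2 * eps\<^sup>2" and P0: "0 < P"
    and Pc: "(case Pmax of None \<Rightarrow> True | Some Pm \<Rightarrow> P \<le> Pm)"
    and dw1: "dlo \<le> dw" and dw2: "dw \<le> dhi" and th1: "thlo \<le> th" and th2: "th \<le> pi / 2"
    using feas unfolding feasible_def by auto
  have dw0: "0 < dw" using dw1 assms by linarith
  have sth: "0 \<le> sin th" using th1 th2 assms by (intro sin_ge_zero) auto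
  have "cos thlo < cos 0" using assms by (intro cos_monotone_0_pi) auto
  hence "cos thlo < 1" by simp
  hence "L * cos thlo < L" using assms by simp
  hence dhiL: "dhi < L" using assms by linarith
  have r: "0 < dhi / L" "dhi / L < 1" using assms dhiL by auto
  have rc: "dhi / L \<le> cos thlo" using assms by (simp add: pos_divide_le_eq mult.commute)
  have arcth: "arccos (cos th) = th" using th1 th2 assms by (intro arccos_cos) auto
  have improve: False if nc: "\<not> (dw = dhi \<and> dhi \<le> L * cos th)"
  proof -
    obtain dw' th' where
      d1: "dlo \<le> dw'" "dw' \<le> dhi" "thlo \<le> th'" "th' \<le> pi / 2" "dw \<le> dw'" "th' \<le> th"
      and db: "0 < d_b L dw' th'" "d_b L dw' th' < d_b L dw th"
      and rt: "dw * sin th / d_b L dw th \<le> dw' * sin th' / d_b L dw' th'"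
      and s': "0 \<le> sin th'"
    proof (cases "dhi \<le> L * cos th")
      case True
      with nc dw2 have "dw < dhi" by auto
      hence lt: "dw < dhi" .
      from caseA[OF assms(1) dw0 lt dhiL True sth] show ?thesis
        using that[of dhi th] assms th1 th2 sth lt by auto
    next
      case False
      hence F: "L * cos th < dhi" by simp
      define th0 where "th0 = arccos (dhi / L)"
      have "th0 \<le> pi / 2" unfolding th0_def using r by (intro arccos_le_pi2) auto
      moreover have "thlo \<le> th0"
      proof -
        have "arccos (cos thlo) \<le> arccos (dhi / L)" using r rc by (intro arccos_le_arccos) auto
        moreover have "arccos (cos thlo) = thlo" using assms by (intro arccos_cos) auto
        ultimately show ?thesis unfolding th0_def by simp
      qed
      moreover have "th0 \<le> th"
      proof -
        have "cos th \<le> dhi / L" using F \<open>L > 0\<close> by (simp add: pos_le_divide_eq mult.commute)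
        hence "arccos (dhi / L) \<le> arccos (cos th)" using r
          by (intro arccos_le_arccos) auto
        thus ?thesis using arcth unfolding th0_def by simp
      qed
      moreover have "0 \<le> sin th0" using \<open>th0 \<le> pi/2\<close> \<open>thlo \<le> th0\<close> assms
        by (intro sin_ge_zero) auto
      ultimately show ?thesis
        using caseB[OF assms(1) dw0 dw2 dhiL F sth] that[of dhi th0] assms dw2
        unfolding th0_def by auto
    qed
    have rb1: "0 \<le> dw * sin th / d_b L dw th"
      using ratio_bounds[of L dw th] db dw0 sth by auto
    have dw'0: "0 \<le> dw'" using d1 dw0 by linarith
    have rb2: "dw' * sin th' / d_b L dw' th' \<le> 1"
      using ratio_bounds[of L dw' th'] db dw'0 s' by auto
    have f: "f_ch a b xiL L dw th < f_ch a b xiL L dw' th'"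
      using f_better[OF assms(4,5,2) db rb1 rt rb2] .
    have Pb: "Pbar a b xiL xiN P dw' th' \<le> Pbar a b xiL xiN P dw th"
      and Pb0: "0 \<le> Pbar a b xiL xiN P dw' th'"
      using Pbar_mono[OF assms(4,5,2,3) P0 dw0 \<open>dw \<le> dw'\<close> \<open>th' \<le> th\<close>] by auto
    have "D01 n a b xiL xiN sw2 P dw' th' \<le> D01 n a b xiL xiN sw2 P dw th"
      unfolding D01_def Let_def
      using h_mono[OF assms(7) Pb0 Pb] by (intro mult_left_mono) auto
    hence "feasible n a b xiL xiN sw2 eps Pmax dlo dhi thlo P dw' th'"
      unfolding feasible_def using D P0 Pc d1 by auto
    hence "gamma_b a b xiL L sb2 P dw' th' \<le> gamma_b a b xiL L sb2 P dw th" by (rule best)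
    moreover have "gamma_b a b xiL L sb2 P dw th < gamma_b a b xiL L sb2 P dw' th'"
      unfolding gamma_b_def using f P0 assms(6) by (simp add: divide_strict_right_mono)
    ultimately show False by simp
  qed
  hence "dw = dhi" and dc: "dhi \<le> L * cos th" by auto
  have "dhi / L \<le> cos th" using dc assms by (simp add: pos_divide_le_eq mult.commute)
  hence "arccos (cos th) \<le> arccos (dhi / L)" using r by (intro arccos_le_arccos) auto
  thus "dw = dhi \<and> thlo \<le> th \<and> th \<le> arccos (dhi / L)" using arcth \<open>dw = dhi\<close> th1 by simp
qed

end
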